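(* Let $\mathcal N'$ be the set of pairs of integers $(p,u)$ such that either $p=1$ and $u=0$, or $u=2n\geq 2^m\geq p\geq 2$ for some integers $m,n$. Let $\mathcal N=\mathcal N'\cup\{(p,\infty): p\geq 2 \text{ an integer or } p=\infty\}$. If $F$ is a real field, then $(p(F),u(F))\in\mathcal N$. If in addition $I^k_tF=0$ for some $k\geq 1$, then $p(F)\leq 2^{k-1}$.
   Context: All fields have characteristic $\neq 2$, forms are nondegenerate and finite-dimensional. A field is real if it admits an ordering. $WF$ is the Witt ring, $IF$ its fundamental ideal, $I^kF$ its $k$-th power, $W_tF$ the torsion part of $WF$ (for real $F$, the forms of signature $0$ at every ordering), and $I^k_tF=I^kF\cap W_tF$. The Pythagoras number $p(F)$ is the least integer $p\geq1$ such that every sum of squares in $F$ is a sum of $p$ squares ($\infty$ if none exists). The $u$-invariant $u(F)$ is the supremum of dimensions of anisotropic forms over $F$ whose class lies in $W_tF$ (torsion forms); for nonreal $F$ this is the supremum of dimensions of all anisotropic forms. *)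

theory Defs
  imports Main "HOL-Library.Extended_Nat"
begin

text \<open>Fields of characteristic not 2 are types of class field with 2 \<noteq> 0.
  Since char \<noteq> 2, every nondegenerate quadratic form is diagonalizable, so a
  (nondegenerate) form of dimension n is represented by a list of n nonzero
  diagonal entries.  Vectors are functions nat \<Rightarrow> 'a, of which only the
  entries with index < n matter.\<close>

definition is_form :: "'a::field list \<Rightarrow> bool" where
  "is_form a \<longleftrightarrow> (\<forall>x\<in>set a. x \<noteq> 0)"

definition qval :: "'a::field list \<Rightarrow> (nat \<Rightarrow> 'a) \<Rightarrow> 'a" where
  "qval a x = (\<Sum>i<length a. a ! i * (x i)^2)"

definition isotropic :: "'a::field list \<Rightarrow> bool" where
  "isotropic a \<longleftrightarrow> (\<exists>x. (\<exists>i<length a. x i \<noteq> 0) \<and> qval a x = 0)"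

definition anisotropic :: "'a::field list \<Rightarrow> bool" where
  "anisotropic a \<longleftrightarrow> \<not> isotropic a"

definition linmap :: "nat \<Rightarrow> (nat \<Rightarrow> nat \<Rightarrow> 'a::field) \<Rightarrow> (nat \<Rightarrow> 'a) \<Rightarrow> (nat \<Rightarrow> 'a)" where
  "linmap n M x = (\<lambda>i. \<Sum>j<n. M i j * x j)"

definition isometric :: "'a::field list \<Rightarrow> 'a list \<Rightarrow> bool" where
  "isometric a b \<longleftrightarrow> length a = length b \<and>
     (\<exists>M. (\<forall>x. (\<forall>i<length a. linmap (length a) M x i = 0) \<longrightarrow> (\<forall>j<length a. x j = 0))
         \<and> (\<forall>x. qval a (linmap (length a) M x) = qval b x))"

definition hyperbolic :: "'a::field list \<Rightarrow> bool" where
  "hyperbolic a \<longleftrightarrow> (\<exists>k. isometric a (concat (replicate k [1, -1])))"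

definition witt_equiv :: "'a::field list \<Rightarrow> 'a list \<Rightarrow> bool" where
  "witt_equiv a b \<longleftrightarrow> hyperbolic (a @ map uminus b)"

definition torsion_form :: "'a::field list \<Rightarrow> bool" where
  "torsion_form a \<longleftrightarrow> (\<exists>m\<ge>1. hyperbolic (concat (replicate m a)))"

text \<open>Pfister form <<a1,...,ak>> = <1,-a1> \<otimes> ... \<otimes> <1,-ak>.\<close>
fun pfister :: "'a::field list \<Rightarrow> 'a list" where
  "pfister [] = [1]"
| "pfister (x # xs) = pfister xs @ map (\<lambda>y. (- x) * y) (pfister xs)"

text \<open>The Witt class of a lies in I^k F (additively generated by k-fold Pfister
  forms; negatives are scalar multiples, so I^k consists of the classes of
  orthogonal sums of scaled k-fold Pfister forms).\<close>
definition in_Ik :: "nat \<Rightarrow> 'a::field list \<Rightarrow> bool" where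
  "in_Ik k a \<longleftrightarrow> (\<exists>cs :: ('a \<times> 'a list) list.
      (\<forall>(c, as) \<in> set cs. c \<noteq> 0 \<and> length as = k \<and> (\<forall>x\<in>set as. x \<noteq> 0)) \<and>
      witt_equiv a (concat (map (\<lambda>(c, as). map (\<lambda>y. c * y) (pfister as)) cs)))"

definition Ikt_zero :: "'a::field itself \<Rightarrow> nat \<Rightarrow> bool" where
  "Ikt_zero _ k \<longleftrightarrow> (\<forall>a :: 'a list. is_form a \<and> in_Ik k a \<and> torsion_form a \<longrightarrow> hyperbolic a)"

definition is_ordering :: "'a::field set \<Rightarrow> bool" where
  "is_ordering P \<longleftrightarrow> (\<forall>x\<in>P. \<forall>y\<in>P. x + y \<in> P \<and> x * y \<in> P) \<and>
     (\<forall>x. x \<in> P \<or> - x \<in> P) \<and> (\<forall>x. x \<in> P \<and> - x \<in> P \<longrightarrow> x = 0)"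

definition real_field :: "'a::field itself \<Rightarrow> bool" where
  "real_field _ \<longleftrightarrow> (\<exists>P :: 'a set. is_ordering P)"

definition sum_of_squares :: "nat \<Rightarrow> 'a::field \<Rightarrow> bool" where
  "sum_of_squares n y \<longleftrightarrow> (\<exists>x :: nat \<Rightarrow> 'a. y = (\<Sum>i<n. (x i)^2))"

definition pyth_prop :: "'a::field itself \<Rightarrow> nat \<Rightarrow> bool" where
  "pyth_prop _ p \<longleftrightarrow> p \<ge> 1 \<and> (\<forall>y :: 'a. (\<exists>n. sum_of_squares n y) \<longrightarrow> sum_of_squares p y)"

definition pythagoras_number :: "'a::field itself \<Rightarrow> enat" where
  "pythagoras_number T = (if \<exists>p. pyth_prop T p then enat (LEAST p. pyth_prop T p) else \<infinity>)"

definition u_invariant :: "'a::field itself \<Rightarrow> enat" where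
  "u_invariant _ = Sup {enat (length a) | a :: 'a list. is_form a \<and> anisotropic a \<and> torsion_form a}"

definition admissible_pairs :: "(enat \<times> enat) set" where
  "admissible_pairs =
     {(p, u). (p = 1 \<and> u = 0) \<or>
              (\<exists>m n :: nat. u = enat (2 * n) \<and> 2 * n \<ge> 2 ^ m \<and> enat (2 ^ m) \<ge> p \<and> p \<ge> 2)}
     \<union> {(p, u). u = \<infinity> \<and> p \<ge> 2}"

end

theory Submission
  imports Defs
begin



definition sq :: "nat \<Rightarrow> (nat \<Rightarrow> 'a::field) \<Rightarrow> 'a" where
  "sq n x = (\<Sum>i<n. (x i)^2)"
definition hi :: "nat \<Rightarrow> (nat \<Rightarrow> 'a) \<Rightarrow> nat \<Rightarrow> 'a" where
  "hi n x = (\<lambda>i. x (i + n))"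
definition join :: "nat \<Rightarrow> (nat \<Rightarrow> 'a) \<Rightarrow> (nat \<Rightarrow> 'a) \<Rightarrow> nat \<Rightarrow> 'a" where
  "join n p q = (\<lambda>i. if i < n then p i else q (i - n))"

lemma sum_split_add: "(\<Sum>i<a+b. (f::nat \<Rightarrow> 'b::comm_monoid_add) i) = (\<Sum>i<a. f i) + (\<Sum>i<b. f (i + a))"
  by (induction b) (auto simp: add.commute add.left_commute)

lemma qval_append: "qval (a @ b) x = qval a x + qval b (hi (length a) x)"
proof -
  have "qval (a @ b) x = (\<Sum>i<length a + length b. (a@b) ! i * (x i)^2)"
    by (simp add: qval_def)
  also have "\<dots> = (\<Sum>i<length a. (a@b) ! i * (x i)^2) + (\<Sum>i<length b. (a@b) ! (i + length a) * (x (i + length a))^2)"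
    by (rule sum_split_add)
  also have "\<dots> = qval a x + qval b (hi (length a) x)"
    by (simp add: qval_def hi_def nth_append)
  finally show ?thesis .
qed

lemma qval_replicate: "qval (replicate n c) x = c * sq n x"
  by (simp add: qval_def sq_def sum_distrib_left)

lemma qval_Nil[simp]: "qval [] x = 0" by (simp add: qval_def)

lemma qval_cong: "(\<And>i. i < length a \<Longrightarrow> x i = y i) \<Longrightarrow> qval a x = qval a y"
  by (simp add: qval_def)

lemma sq_cong: "(\<And>i. i < n \<Longrightarrow> x i = y i) \<Longrightarrow> sq n x = sq n y"
  by (simp add: sq_def)

lemma sq_split: "sq (n + n) x = sq n x + sq n (hi n x)"
  unfolding sq_def hi_def by (rule sum_split_add)

lemma hi_join[simp]: "hi n (join n p q) = q"
  by (simp add: hi_def join_def)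

lemma sq_join: "sq (n + n) (join n p q) = sq n p + sq n q"
proof -
  have "sq n (join n p q) = sq n p" by (rule sq_cong) (simp add: join_def)
  thus ?thesis by (simp add: sq_split)
qed

lemma sq_scale: "sq n (\<lambda>i. c * x i) = c^2 * sq n x"
  by (simp add: sq_def sum_distrib_left power_mult_distrib)

lemma qval_scale: "qval a (\<lambda>i. c * x i) = c^2 * qval a x"
  unfolding qval_def sum_distrib_left
  by (rule sum.cong) (simp_all add: power_mult_distrib mult.left_commute)

lemma qval_zero: "qval a (\<lambda>i. 0) = 0" by (simp add: qval_def)

lemma ord_sq: assumes "is_ordering P" shows "x * x \<in> P"
proof -
  from assms have m: "\<And>a b. a \<in> P \<Longrightarrow> b \<in> P \<Longrightarrow> a * b \<in> P" by (simp add: is_ordering_def)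
  from assms have "x \<in> P \<or> -x \<in> P" by (simp add: is_ordering_def)
  thus ?thesis
  proof
    assume "x \<in> P" thus ?thesis using m by blast
  next
    assume "-x \<in> P" hence "(-x) * (-x) \<in> P" using m by blast
    thus ?thesis by simp
  qed
qed

lemma ord_pow2: assumes "is_ordering P" shows "x^2 \<in> P"
  using ord_sq[OF assms] by (simp add: power2_eq_square)

lemma ord_add: "is_ordering P \<Longrightarrow> x \<in> P \<Longrightarrow> y \<in> P \<Longrightarrow> x + y \<in> P"
  by (simp add: is_ordering_def)
lemma ord_mult: "is_ordering P \<Longrightarrow> x \<in> P \<Longrightarrow> y \<in> P \<Longrightarrow> x * y \<in> P"
  by (simp add: is_ordering_def)
lemma ord_zero: "is_ordering P \<Longrightarrow> (0::'a::field) \<in> P"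
  using ord_sq[of P 0] by simp
lemma ord_anti: "is_ordering P \<Longrightarrow> x \<in> P \<Longrightarrow> -x \<in> P \<Longrightarrow> x = 0"
  by (simp add: is_ordering_def)
lemma ord_tot: "is_ordering P \<Longrightarrow> x \<notin> P \<Longrightarrow> -x \<in> P"
  by (auto simp: is_ordering_def)

lemma ord_one: "is_ordering P \<Longrightarrow> (1::'a::field) \<in> P"
  using ord_sq[of P 1] by simp
lemma ord_mone: assumes "is_ordering P" shows "-(1::'a::field) \<notin> P"
proof
  assume "-1 \<in> P"
  hence "(1::'a) = 0" using ord_anti[OF assms, of 1] ord_one[OF assms] by blast
  thus False by simp
qed

lemma ord_sum: assumes "is_ordering P" "\<And>i. i \<in> A \<Longrightarrow> f i \<in> P" shows "sum f A \<in> P"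
  using assms(2)
proof (induction A rule: infinite_finite_induct)
  case (infinite A) thus ?case using ord_zero[OF assms(1)] by simp
next
  case empty thus ?case using ord_zero[OF assms(1)] by simp
next
  case (insert x F)
  have "f x \<in> P" "sum f F \<in> P" using insert.prems insert.IH by auto
  thus ?case using ord_add[OF assms(1)] insert.hyps by simp
qed

lemma ord_sum_zero: assumes "is_ordering P" "finite A" "\<forall>i\<in>A. f i \<in> P" "sum f A = 0"
  shows "\<forall>i\<in>A. f i = 0"
  using assms(2,3,4)
proof (induction A rule: finite_induct)
  case empty thus ?case by simp
next
  case (insert x F)
  have fF: "\<forall>i\<in>F. f i \<in> P" and fx: "f x \<in> P" using insert.prems(1) by auto
  have s: "sum f F \<in> P" by (rule ord_sum[OF assms(1)]) (use fF in blast)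
  have "f x + sum f F = 0" using insert.prems(2) insert.hyps by simp
  hence "sum f F = - f x" by (simp add: add_eq_0_iff)
  hence "f x = 0" using ord_anti[OF assms(1) fx] s by simp
  hence "sum f F = 0" using \<open>sum f F = - f x\<close> by simp
  hence "\<forall>i\<in>F. f i = 0" using insert.IH fF by blast
  thus ?case using \<open>f x = 0\<close> by blast
qed

lemma ord_sq_zero: fixes x :: "nat \<Rightarrow> 'a::field" and P :: "'a set" assumes "is_ordering P" "sq n x = 0" shows "\<forall>i<n. x i = 0"
proof -
  have "\<forall>i\<in>{..<n}. (x i)^2 = 0"
  proof (rule ord_sum_zero[OF assms(1)])
    show "sum (\<lambda>i. (x i)^2) {..<n} = 0" using assms(2) by (simp add: sq_def)
  qed (simp_all add: ord_pow2[OF assms(1)])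
  thus ?thesis by simp
qed

lemma ord_sq_P: "is_ordering P \<Longrightarrow> sq n x \<in> P"
  unfolding sq_def by (rule ord_sum) (auto intro: ord_pow2)

lemma ord_one_plus_sq: fixes w :: "'a::field" and P :: "'a set" assumes "is_ordering P" shows "1 + w^2 \<noteq> 0"
proof
  assume "1 + w^2 = 0"
  hence "w^2 = -1" by (metis add.commute eq_neg_iff_add_eq_0)
  thus False using ord_mone[OF assms] ord_pow2[OF assms, of w] by simp
qed




definition lin :: "nat \<Rightarrow> ((nat \<Rightarrow> 'a::field) \<Rightarrow> (nat \<Rightarrow> 'a)) \<Rightarrow> bool" where
  "lin n L \<longleftrightarrow> (\<forall>x y i. i < n \<longrightarrow> L (\<lambda>j. x j + y j) i = L x i + L y i) \<and>
     (\<forall>c x i. i < n \<longrightarrow> L (\<lambda>j. c * x j) i = c * L x i) \<and>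
     (\<forall>x y. (\<forall>j<n. x j = y j) \<longrightarrow> (\<forall>i<n. L x i = L y i))"

lemma linD1: "lin n L \<Longrightarrow> i < n \<Longrightarrow> L (\<lambda>j. x j + y j) i = L x i + L y i"
  by (simp add: lin_def)
lemma linD2: "lin n L \<Longrightarrow> i < n \<Longrightarrow> L (\<lambda>j. c * x j) i = c * L x i"
  by (simp add: lin_def)
lemma linD3: assumes "lin n L" "\<And>j. j < n \<Longrightarrow> x j = y j" "i < n" shows "L x i = L y i"
proof -
  have "\<forall>x y. (\<forall>j<n. x j = y j) \<longrightarrow> (\<forall>i<n. L x i = L y i)" using assms(1) by (simp add: lin_def)
  thus ?thesis using assms(2,3) by simp
qed

lemma linI:
  assumes "\<And>x y i. i < n \<Longrightarrow> L (\<lambda>j. x j + y j) i = L x i + L y i"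
    "\<And>c x i. i < n \<Longrightarrow> L (\<lambda>j. c * x j) i = c * L x i"
    "\<And>x y i. (\<And>j. j < n \<Longrightarrow> x j = y j) \<Longrightarrow> i < n \<Longrightarrow> L x i = L y i"
  shows "lin n L"
  unfolding lin_def
proof (intro conjI allI impI)
  fix x y :: "nat \<Rightarrow> 'a" and i assume "i < n" thus "L (\<lambda>j. x j + y j) i = L x i + L y i" by (rule assms(1))
next
  fix c and x :: "nat \<Rightarrow> 'a" and i assume "i < n" thus "L (\<lambda>j. c * x j) i = c * L x i" by (rule assms(2))
next
  fix x y :: "nat \<Rightarrow> 'a" and i assume "\<forall>j<n. x j = y j" "i < n" thus "L x i = L y i" by (intro assms(3)) auto
qed

lemma lin_zero: "lin n L \<Longrightarrow> i < n \<Longrightarrow> L (\<lambda>j. 0) i = 0"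
  using linD2[of n L i 0 "\<lambda>j. 0"] by simp

lemma lin_matrix:
  assumes L: "lin n L"
  shows "\<exists>M. \<forall>x i. i < n \<longrightarrow> linmap n M x i = L x i"
proof -
  define M where "M = (\<lambda>i j. L (\<lambda>k. if k = j then 1 else 0) i)"
  have step: "L (\<lambda>k. if k < m then x k else 0) i = (\<Sum>j<m. M i j * x j)" if "i < n" for x i m
  proof (induction m)
    case 0 thus ?case using lin_zero[OF L \<open>i < n\<close>] by simp
  next
    case (Suc m)
    have e: "(\<lambda>k. if k < Suc m then x k else 0) =
       (\<lambda>k. (if k < m then x k else 0) + x m * (if k = m then 1 else 0))"
      by (auto simp: fun_eq_iff less_Suc_eq)
    have "L (\<lambda>k. if k < Suc m then x k else 0) i =
        L (\<lambda>k. if k < m then x k else 0) i + L (\<lambda>k. x m * (if k = m then 1 else 0)) i"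
      unfolding e by (rule linD1[OF L \<open>i < n\<close>])
    also have "L (\<lambda>k. x m * (if k = m then 1 else 0)) i = x m * M i m"
      unfolding M_def by (rule linD2[OF L \<open>i < n\<close>])
    finally show ?case using Suc by (simp add: mult.commute)
  qed
  have "linmap n M x i = L x i" if "i < n" for x i
  proof -
    have "L x i = L (\<lambda>k. if k < n then x k else 0) i"
      by (rule linD3[OF L _ \<open>i < n\<close>]) simp
    moreover have "L (\<lambda>k. if k < n then x k else 0) i = (\<Sum>j<n. M i j * x j)" by (rule step[OF that])
    ultimately show ?thesis by (simp add: linmap_def)
  qed
  thus ?thesis by blast
qed

lemma lin_linmap: "lin n (linmap n M)"
  by (rule linI) (auto simp: linmap_def sum.distrib sum_distrib_left algebra_simps)

lemma lin_comp: fixes A B :: "(nat \<Rightarrow> 'a::field) \<Rightarrow> (nat \<Rightarrow> 'a)"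
  assumes "lin n A" "lin n B" shows "lin n (\<lambda>x. A (B x))"
proof (rule linI)
  fix x y :: "nat \<Rightarrow> 'a" and i assume i: "i < n"
  have "A (B (\<lambda>j. x j + y j)) i = A (\<lambda>j. B x j + B y j) i"
    by (rule linD3[OF assms(1) _ i]) (simp add: linD1[OF assms(2)])
  thus "A (B (\<lambda>j. x j + y j)) i = A (B x) i + A (B y) i"
    using linD1[OF assms(1) i] by simp
next
  fix c and x :: "nat \<Rightarrow> 'a" and i assume i: "i < n"
  have "A (B (\<lambda>j. c * x j)) i = A (\<lambda>j. c * B x j) i"
    by (rule linD3[OF assms(1) _ i]) (simp add: linD2[OF assms(2)])
  thus "A (B (\<lambda>j. c * x j)) i = c * A (B x) i"
    using linD2[OF assms(1) i] by simp
next
  fix x y :: "nat \<Rightarrow> 'a" and i assume "\<And>j. j < n \<Longrightarrow> x j = y j" "i < n"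
  thus "A (B x) i = A (B y) i"
    using linD3[OF assms(1)] linD3[OF assms(2)] by metis
qed

lemma iso_fun:
  assumes L: "lin n L" and la: "length a = n" and lb: "length b = n"
    and inj: "\<And>x. (\<And>i. i < n \<Longrightarrow> L x i = 0) \<Longrightarrow> (\<forall>j<n. x j = 0)"
    and q: "\<And>x. qval a (L x) = qval b x"
  shows "isometric a b"
proof -
  obtain M where M: "\<And>x i. i < n \<Longrightarrow> linmap n M x i = L x i"
    using lin_matrix[OF L] by blast
  have inj': "\<forall>x. (\<forall>i<length a. linmap (length a) M x i = 0) \<longrightarrow> (\<forall>j<length a. x j = 0)"
    using inj M la by simp
  have q': "\<forall>x. qval a (linmap (length a) M x) = qval b x"
  proof
    fix x
    have "qval a (linmap n M x) = qval a (L x)" by (rule qval_cong) (use M la in simp)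
    thus "qval a (linmap (length a) M x) = qval b x" using q[of x] la by simp
  qed
  show ?thesis unfolding isometric_def
  proof (rule conjI)
    show "length a = length b" using la lb by simp
    show "\<exists>M. (\<forall>x. (\<forall>i<length a. linmap (length a) M x i = 0) \<longrightarrow> (\<forall>j<length a. x j = 0)) \<and>
          (\<forall>x. qval a (linmap (length a) M x) = qval b x)"
      by (rule exI[where x = M]) (use inj' q' in blast)
  qed
qed

lemma isometricE:
  assumes "isometric a b"
  obtains L where "lin (length a) L" "length b = length a"
    "\<And>x. (\<And>i. i < length a \<Longrightarrow> L x i = 0) \<Longrightarrow> (\<forall>j<length a. x j = 0)"
    "\<And>x. qval a (L x) = qval b x"
  using assms lin_linmap unfolding isometric_def by metis

lemma iso_trans: assumes "isometric a b" "isometric b c" shows "isometric a c"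
proof -
  obtain A where A: "lin (length a) A" "length b = length a"
    "\<And>x. (\<And>i. i < length a \<Longrightarrow> A x i = 0) \<Longrightarrow> (\<forall>j<length a. x j = 0)"
    "\<And>x. qval a (A x) = qval b x" using isometricE[OF assms(1)] by blast
  obtain B where B: "lin (length b) B" "length c = length b"
    "\<And>x. (\<And>i. i < length b \<Longrightarrow> B x i = 0) \<Longrightarrow> (\<forall>j<length b. x j = 0)"
    "\<And>x. qval b (B x) = qval c x" using isometricE[OF assms(2)] by blast
  show ?thesis
  proof (rule iso_fun[where L = "\<lambda>x. A (B x)"])
    show "lin (length a) (\<lambda>x. A (B x))" using lin_comp A B by metis
    show "length a = length a" ..
    show "length c = length a" using A B by simp
    fix x assume "\<And>i. i < length a \<Longrightarrow> A (B x) i = 0"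
    hence "\<forall>j<length a. B x j = 0" using A(3) by blast
    thus "\<forall>j<length a. x j = 0" using B(3)[of x] A(2) by simp
  next
    fix x show "qval a (A (B x)) = qval c x" using A(4) B(4) by simp
  qed
qed




definition linr :: "nat \<Rightarrow> nat \<Rightarrow> ((nat \<Rightarrow> 'a::field) \<Rightarrow> (nat \<Rightarrow> 'a)) \<Rightarrow> bool" where
  "linr m n L \<longleftrightarrow> (\<forall>x y i. i < n \<longrightarrow> L (\<lambda>j. x j + y j) i = L x i + L y i) \<and>
     (\<forall>c x i. i < n \<longrightarrow> L (\<lambda>j. c * x j) i = c * L x i) \<and>
     (\<forall>x y. (\<forall>j<m. x j = y j) \<longrightarrow> (\<forall>i<n. L x i = L y i))"

lemma lin_linr: "lin n L = linr n n L"
  by (simp add: lin_def linr_def)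

lemma linrD1: "linr m n L \<Longrightarrow> i < n \<Longrightarrow> L (\<lambda>j. x j + y j) i = L x i + L y i"
  by (simp add: linr_def)
lemma linrD2: "linr m n L \<Longrightarrow> i < n \<Longrightarrow> L (\<lambda>j. c * x j) i = c * L x i"
  by (simp add: linr_def)
lemma linrD3: assumes "linr m n L" "\<And>j. j < m \<Longrightarrow> x j = y j" "i < n" shows "L x i = L y i"
proof -
  have "\<forall>x y. (\<forall>j<m. x j = y j) \<longrightarrow> (\<forall>i<n. L x i = L y i)" using assms(1) by (simp add: linr_def)
  thus ?thesis using assms(2,3) by simp
qed

lemma linrI:
  fixes L :: "(nat \<Rightarrow> 'a::field) \<Rightarrow> (nat \<Rightarrow> 'a)"
  assumes "\<And>x y i. i < n \<Longrightarrow> L (\<lambda>j. x j + y j) i = L x i + L y i"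
    "\<And>c x i. i < n \<Longrightarrow> L (\<lambda>j. c * x j) i = c * L x i"
    "\<And>x y i. (\<And>j. j < m \<Longrightarrow> x j = y j) \<Longrightarrow> i < n \<Longrightarrow> L x i = L y i"
  shows "linr m n L"
  unfolding linr_def
proof (intro conjI allI impI)
  fix x y :: "nat \<Rightarrow> 'a" and i assume "i < n" thus "L (\<lambda>j. x j + y j) i = L x i + L y i" by (rule assms(1))
next
  fix c and x :: "nat \<Rightarrow> 'a" and i assume "i < n" thus "L (\<lambda>j. c * x j) i = c * L x i" by (rule assms(2))
next
  fix x y :: "nat \<Rightarrow> 'a" and i assume "\<forall>j<m. x j = y j" "i < n" thus "L x i = L y i" by (intro assms(3)) auto
qed

lemma linr_comp:
  fixes A B :: "(nat \<Rightarrow> 'a::field) \<Rightarrow> (nat \<Rightarrow> 'a)"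
  assumes B: "linr m k B" and A: "linr k n A" shows "linr m n (\<lambda>x. A (B x))"
proof (rule linrI)
  fix x y :: "nat \<Rightarrow> 'a" and i assume i: "i < n"
  have "A (B (\<lambda>j. x j + y j)) i = A (\<lambda>j. B x j + B y j) i"
    by (rule linrD3[OF A _ i]) (simp add: linrD1[OF B])
  thus "A (B (\<lambda>j. x j + y j)) i = A (B x) i + A (B y) i"
    using linrD1[OF A i] by simp
next
  fix c and x :: "nat \<Rightarrow> 'a" and i assume i: "i < n"
  have "A (B (\<lambda>j. c * x j)) i = A (\<lambda>j. c * B x j) i"
    by (rule linrD3[OF A _ i]) (simp add: linrD2[OF B])
  thus "A (B (\<lambda>j. c * x j)) i = c * A (B x) i"
    using linrD2[OF A i] by simp
next
  fix x y :: "nat \<Rightarrow> 'a" and i assume xy: "\<And>j. j < m \<Longrightarrow> x j = y j" and i: "i < n"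
  have "B x j = B y j" if "j < k" for j by (rule linrD3[OF B]) (use xy that in auto)
  thus "A (B x) i = A (B y) i" using linrD3[OF A _ i] by blast
qed

lemma linr_id: "linr n n (\<lambda>x. x)"
  by (rule linrI) auto

lemma linr_hi: "linr (n + n) n (hi n)"
  by (rule linrI) (auto simp: hi_def)

lemma linr_add:
  fixes A B :: "(nat \<Rightarrow> 'a::field) \<Rightarrow> (nat \<Rightarrow> 'a)"
  assumes A: "linr m n A" and B: "linr m n B" shows "linr m n (\<lambda>x j. A x j + B x j)"
proof (rule linrI)
  fix x y :: "nat \<Rightarrow> 'a" and i assume i: "i < n"
  show "A (\<lambda>j. x j + y j) i + B (\<lambda>j. x j + y j) i = A x i + B x i + (A y i + B y i)"
    using linrD1[OF A i] linrD1[OF B i] by (simp add: algebra_simps)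
next
  fix c and x :: "nat \<Rightarrow> 'a" and i assume i: "i < n"
  show "A (\<lambda>j. c * x j) i + B (\<lambda>j. c * x j) i = c * (A x i + B x i)"
    using linrD2[OF A i] linrD2[OF B i] by (simp add: algebra_simps)
next
  fix x y :: "nat \<Rightarrow> 'a" and i assume xy: "\<And>j. j < m \<Longrightarrow> x j = y j" and i: "i < n"
  show "A x i + B x i = A y i + B y i" using linrD3[OF A xy i] linrD3[OF B xy i] by simp
qed

lemma linr_scale:
  fixes A :: "(nat \<Rightarrow> 'a::field) \<Rightarrow> (nat \<Rightarrow> 'a)"
  assumes A: "linr m n A" shows "linr m n (\<lambda>x j. c * A x j)"
proof (rule linrI)
  fix x y :: "nat \<Rightarrow> 'a" and i assume i: "i < n"
  show "c * A (\<lambda>j. x j + y j) i = c * A x i + c * A y i"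
    using linrD1[OF A i] by (simp add: algebra_simps)
next
  fix d and x :: "nat \<Rightarrow> 'a" and i assume i: "i < n"
  show "c * A (\<lambda>j. d * x j) i = d * (c * A x i)"
    using linrD2[OF A i] by (simp add: algebra_simps)
next
  fix x y :: "nat \<Rightarrow> 'a" and i assume xy: "\<And>j. j < m \<Longrightarrow> x j = y j" and i: "i < n"
  show "c * A x i = c * A y i" using linrD3[OF A, of x y i] xy i by simp
qed

lemma linr_join:
  fixes A B :: "(nat \<Rightarrow> 'a::field) \<Rightarrow> (nat \<Rightarrow> 'a)"
  assumes A: "linr m n A" and B: "linr m n B" shows "linr m (n + n) (\<lambda>x. join n (A x) (B x))"
proof (rule linrI)
  fix x y :: "nat \<Rightarrow> 'a" and i assume i: "i < n + n"
  show "join n (A (\<lambda>j. x j + y j)) (B (\<lambda>j. x j + y j)) i = join n (A x) (B x) i + join n (A y) (B y) i"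
    using linrD1[OF A] linrD1[OF B, of "i - n"] i by (simp add: join_def)
next
  fix c and x :: "nat \<Rightarrow> 'a" and i assume i: "i < n + n"
  show "join n (A (\<lambda>j. c * x j)) (B (\<lambda>j. c * x j)) i = c * join n (A x) (B x) i"
    using linrD2[OF A] linrD2[OF B, of "i - n"] i by (simp add: join_def)
next
  fix x y :: "nat \<Rightarrow> 'a" and i assume xy: "\<And>j. j < m \<Longrightarrow> x j = y j" and i: "i < n + n"
  have "A x i = A y i" if "i < n" by (rule linrD3[OF A]) (use xy that in auto)
  moreover have "B x (i - n) = B y (i - n)" if "\<not> i < n" by (rule linrD3[OF B]) (use xy that i in auto)
  ultimately show "join n (A x) (B x) i = join n (A y) (B y) i" by (simp add: join_def)
qed

lemma key_identity:
  fixes a b :: "'a::field"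
  shows "a * sq n (\<lambda>j. x j + (- b) * q j) + b * sq n (\<lambda>j. x j + a * q j) = (a + b) * (sq n x + a * b * sq n q)"
proof -
  have "a * sq n (\<lambda>j. x j + (- b) * q j) + b * sq n (\<lambda>j. x j + a * q j)
      = (\<Sum>j<n. a * (x j + (- b) * q j)^2 + b * (x j + a * q j)^2)"
    by (simp add: sq_def sum_distrib_left sum.distrib)
  also have "\<dots> = (\<Sum>j<n. (a + b) * ((x j)^2 + a * b * (q j)^2))"
    by (rule sum.cong) (simp_all add: power2_eq_square algebra_simps)
  also have "\<dots> = (a + b) * (sq n x + a * b * sq n q)"
    by (simp add: sq_def sum_distrib_left sum.distrib algebra_simps)
  finally show ?thesis .
qed




lemma linr_id': "n \<le> m \<Longrightarrow> linr m n (\<lambda>x. x)"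
  by (rule linrI) auto

lemma sq_one: "sq 1 z = (z 0)^2" by (simp add: sq_def)

lemma round:
  fixes u :: "nat \<Rightarrow> 'a::field"
  shows "\<exists>T. linr (2^k) (2^k) T \<and> (\<forall>z. sq (2^k) (T z) = sq (2^k) u * sq (2^k) z)"
proof (induction k arbitrary: u)
  case 0
  have "linr 1 1 (\<lambda>x j. u 0 * x j)" using linr_scale[OF linr_id, of 1 "u 0"] by simp
  moreover have "sq 1 (\<lambda>j. u 0 * z j) = sq 1 u * sq 1 z" for z
    by (simp add: sq_def power_mult_distrib)
  ultimately show ?case by (intro exI[of _ "\<lambda>x j. u 0 * x j"]) simp
next
  case (Suc k)
  define n :: nat where "n = 2^k"
  have nn: "2^Suc k = n + n" by (simp add: n_def)
  obtain Ta where Ta: "linr n n Ta" "\<And>z. sq n (Ta z) = sq n u * sq n z"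
    using Suc.IH[of u] n_def by blast
  obtain Tb where Tb: "linr n n Tb" "\<And>z. sq n (Tb z) = sq n (hi n u) * sq n z"
    using Suc.IH[of "hi n u"] n_def by blast
  define a where "a = sq n u"
  define b where "b = sq n (hi n u)"
  have c: "sq (n + n) u = a + b" by (simp add: sq_split a_def b_def)
  have hiL: "linr (n + n) n (\<lambda>x. Tb (hi n x))" by (rule linr_comp[OF linr_hi Tb(1)])
  have hiLa: "linr (n + n) n (\<lambda>x. Ta (hi n x))" by (rule linr_comp[OF linr_hi Ta(1)])
  have idL: "linr (n + n) n (\<lambda>x. x)" by (rule linr_id') simp
  have TaL: "linr (n + n) n (\<lambda>x. Ta x)"
    using linr_comp[OF idL Ta(1)] by simp
  have TbL: "linr (n + n) n (\<lambda>x. Tb x)"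
    using linr_comp[OF idL Tb(1)] by simp
  show ?case
  proof (cases "a = 0")
    case True
    define T where "T = (\<lambda>z. join n (Tb z) (Tb (hi n z)))"
    have "linr (n + n) (n + n) T" unfolding T_def by (rule linr_join[OF TbL hiL])
    moreover have "sq (n + n) (T z) = sq (n + n) u * sq (n + n) z" for z
      unfolding T_def sq_join using Tb(2) True c by (simp add: sq_split b_def algebra_simps)
    ultimately show ?thesis unfolding nn by blast
  next
    case anz: False
    show ?thesis
    proof (cases "b = 0")
      case True
      define T where "T = (\<lambda>z. join n (Ta z) (Ta (hi n z)))"
      have "linr (n + n) (n + n) T" unfolding T_def by (rule linr_join[OF TaL hiLa])
      moreover have "sq (n + n) (T z) = sq (n + n) u * sq (n + n) z" for z
        unfolding T_def sq_join using Ta(2) True c by (simp add: sq_split a_def algebra_simps)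
      ultimately show ?thesis unfolding nn by blast
    next
      case bnz: False
      define Q where "Q = (\<lambda>z j. (1 / (a * b)) * Ta (Tb (hi n z)) j)"
      define T where "T = (\<lambda>z. join n (Ta (\<lambda>j. z j + (- b) * Q z j)) (Tb (\<lambda>j. z j + a * Q z j)))"
      have QL: "linr (n + n) n Q"
      proof -
        have "linr (n + n) n (\<lambda>x. Ta (Tb (hi n x)))" by (rule linr_comp[OF hiL Ta(1)])
        from linr_scale[OF this, of "1 / (a * b)"] show ?thesis unfolding Q_def by simp
      qed
      have L1: "linr (n + n) n (\<lambda>z j. z j + (- b) * Q z j)"
        using linr_add[OF idL linr_scale[OF QL, of "- b"]] by simp
      have L2: "linr (n + n) n (\<lambda>z j. z j + a * Q z j)"
        using linr_add[OF idL linr_scale[OF QL, of "a"]] by simp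
      have "linr (n + n) (n + n) T" unfolding T_def
        by (rule linr_join[OF linr_comp[OF L1 Ta(1)] linr_comp[OF L2 Tb(1)]])
      moreover have "sq (n + n) (T z) = sq (n + n) u * sq (n + n) z" for z
      proof -
        have sQ: "sq n (Q z) = (1 / (a * b))^2 * (a * b * sq n (hi n z))"
          unfolding Q_def sq_scale using Ta(2) Tb(2) by (simp add: a_def b_def)
        have abQ: "a * b * sq n (Q z) = sq n (hi n z)"
          unfolding sQ using anz bnz by (simp add: field_simps power2_eq_square)
        have "sq (n + n) (T z) = a * sq n (\<lambda>j. z j + (- b) * Q z j) + b * sq n (\<lambda>j. z j + a * Q z j)"
          unfolding T_def sq_join using Ta(2) Tb(2) by (simp add: a_def b_def)
        also have "\<dots> = (a + b) * (sq n z + a * b * sq n (Q z))" by (rule key_identity)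
        also have "\<dots> = sq (n + n) u * sq (n + n) z" by (simp only: abQ c sq_split[of n z])
        finally show ?thesis .
      qed
      ultimately show ?thesis unfolding nn by blast
    qed
  qed
qed




lemma iso_perm:
  fixes a b :: "'a::field list"
  assumes bij: "bij_betw \<sigma> {..<n} {..<n}" and la: "length a = n" and lb: "length b = n"
    and ab: "\<And>i. i < n \<Longrightarrow> a ! i = b ! (\<sigma> i)"
  shows "isometric a b"
proof (rule iso_fun[where L = "\<lambda>x i. x (\<sigma> i)" and n = n])
  have sig: "\<And>i. i < n \<Longrightarrow> \<sigma> i < n" using bij by (auto simp: bij_betw_def)
  show "lin n (\<lambda>x i. x (\<sigma> i))" by (rule linI) (auto simp: sig)
  show "length a = n" "length b = n" by fact+
  fix x :: "nat \<Rightarrow> 'a"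
  assume z: "\<And>i. i < n \<Longrightarrow> x (\<sigma> i) = 0"
  show "\<forall>j<n. x j = 0"
  proof (intro allI impI)
    fix j assume "j < n"
    then obtain i where "i < n" "j = \<sigma> i" using bij by (auto simp: bij_betw_def)
    thus "x j = 0" using z by simp
  qed
next
  fix x :: "nat \<Rightarrow> 'a"
  have "qval a (\<lambda>i. x (\<sigma> i)) = (\<Sum>i\<in>{..<n}. (\<lambda>j. b ! j * (x j)^2) (\<sigma> i))"
    unfolding qval_def la by (rule sum.cong) (simp_all add: ab)
  also have "\<dots> = (\<Sum>j\<in>{..<n}. b ! j * (x j)^2)" by (rule sum.reindex_bij_betw[OF bij])
  also have "\<dots> = qval b x" by (simp add: qval_def lb)
  finally show "qval a (\<lambda>i. x (\<sigma> i)) = qval b x" .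
qed

lemma iso_perm_sym:
  fixes a b :: "'a::field list"
  assumes bij: "bij_betw \<sigma> {..<n} {..<n}" and la: "length a = n" and lb: "length b = n"
    and ab: "\<And>i. i < n \<Longrightarrow> a ! i = b ! (\<sigma> i)"
  shows "isometric b a"
proof (rule iso_perm[OF bij_betw_inv_into[OF bij] lb la])
  fix j assume j: "j < n"
  have jim: "j \<in> \<sigma> ` {..<n}" using bij j by (auto simp: bij_betw_def)
  have "inv_into {..<n} \<sigma> j < n" using inv_into_into[OF jim] by simp
  hence "a ! inv_into {..<n} \<sigma> j = b ! (\<sigma> (inv_into {..<n} \<sigma> j))" by (rule ab)
  also have "\<sigma> (inv_into {..<n} \<sigma> j) = j" by (rule f_inv_into_f[OF jim])
  finally show "b ! j = a ! inv_into {..<n} \<sigma> j" by simp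
qed

lemma nth_concat_replicate:
  "i < r * length l \<Longrightarrow> concat (replicate r l) ! i = l ! (i mod length l)"
proof (induction r arbitrary: i)
  case 0 thus ?case by simp
next
  case (Suc r)
  show ?case
  proof (cases "i < length l")
    case True thus ?thesis by (simp add: nth_append)
  next
    case False
    hence "i - length l < r * length l" using Suc.prems by simp
    hence "concat (replicate r l) ! (i - length l) = l ! ((i - length l) mod length l)" by (rule Suc.IH)
    moreover have "(i - length l) mod length l = i mod length l" using False by (simp add: le_mod_geq)
    ultimately show ?thesis using False by (simp add: nth_append)
  qed
qed

definition psig :: "nat \<Rightarrow> nat \<Rightarrow> nat \<Rightarrow> nat" where
  "psig r M i = (if i mod (2*M) < M then (i div (2*M)) * M + i mod (2*M)
                 else r * M + (i div (2*M)) * M + (i mod (2*M) - M))"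

definition prho :: "nat \<Rightarrow> nat \<Rightarrow> nat \<Rightarrow> nat" where
  "prho r M k = (if k < r * M then (k div M) * (2*M) + k mod M
                 else ((k - r*M) div M) * (2*M) + M + (k - r*M) mod M)"

lemma psig_props0:
  assumes M: "0 < M" and i: "i < r * (2 * M)"
  shows "psig r M i < r * (2 * M) \<and> prho r M (psig r M i) = i \<and> ((psig r M i < r * M) = (i mod (2*M) < M))"
proof -
  define t where "t = i div (2*M)"
  define w where "w = i mod (2*M)"
  have it: "i = t * (2*M) + w" unfolding t_def w_def by (rule div_mult_mod_eq[symmetric])
  have tr: "t < r" unfolding t_def using i less_mult_imp_div_less by blast
  hence tr': "t + 1 \<le> r" by simp
  have w2: "w < 2*M" unfolding w_def using M by simp
  have rM: "(t + 1) * M \<le> r * M" using tr' by (rule mult_le_mono1)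
  have ww: "i mod (2*M) = w" by (simp add: w_def)
  show "psig r M i < r * (2 * M) \<and> prho r M (psig r M i) = i \<and> ((psig r M i < r * M) = (i mod (2*M) < M))"
  proof (cases "w < M")
    case True
    have ps: "psig r M i = t * M + w" using True unfolding psig_def t_def w_def by simp
    have lt: "t * M + w < r * M" using rM True by (simp add: algebra_simps)
    have d: "(t * M + w) div M = t" using True by simp
    have m: "(t * M + w) mod M = w" using True by simp
    have "prho r M (psig r M i) = t * (2*M) + w" unfolding ps prho_def d m using lt by simp
    hence "prho r M (psig r M i) = i" using it by simp
    thus ?thesis using lt True w2 tr rM unfolding ps ww by (simp add: algebra_simps)
  next
    case False
    have ps: "psig r M i = r * M + (t * M + (w - M))" using False unfolding psig_def t_def w_def by simp
    have wm: "w - M < M" using w2 by simp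
    have lt: "t * M + (w - M) < r * M" using rM wm by (simp add: algebra_simps)
    have d: "(t * M + (w - M)) div M = t" using wm by simp
    have m: "(t * M + (w - M)) mod M = w - M" using wm by simp
    have "prho r M (psig r M i) = t * (2*M) + M + (w - M)" unfolding ps prho_def using d m by simp
    also have "\<dots> = i" using False it by simp
    finally have pr: "prho r M (psig r M i) = i" .
    have e2: "r * (2 * M) = r * M + r * M" by simp
    have g1: "r * M + (t * M + (w - M)) < r * (2 * M)" using lt e2 by linarith
    have g2: "\<not> r * M + (t * M + (w - M)) < r * M" by simp
    show ?thesis using pr g1 g2 False unfolding ps ww by blast
  qed
qed

lemma psig_props:
  assumes M: "0 < M" and i: "i < r * (2 * M)"
  shows "psig r M i < r * (2 * M)" and "prho r M (psig r M i) = i"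
    and "(psig r M i < r * M) = (i mod (2*M) < M)"
  using psig_props0[OF assms] by auto

lemma psig_bij:
  assumes M: "0 < M"
  shows "bij_betw (psig r M) {..<r * (2*M)} {..<r * (2*M)}"
proof -
  have sub: "psig r M ` {..<r * (2*M)} \<subseteq> {..<r * (2*M)}" using psig_props(1)[OF M] by auto
  have inj: "inj_on (psig r M) {..<r * (2*M)}"
    by (rule inj_on_inverseI[where g = "prho r M"]) (use psig_props(2)[OF M] in auto)
  show ?thesis unfolding bij_betw_def using inj endo_inj_surj[OF _ sub inj] by simp
qed

lemma iso_interleave:
  fixes c1 c2 :: "'a::field" and r :: nat
  assumes M: "0 < M"
  defines "A \<equiv> concat (replicate r (replicate M c1 @ replicate M c2))"
    and "B \<equiv> replicate (r * M) c1 @ replicate (r * M) c2"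
  shows "isometric A B" "isometric B A"
proof -
  have lA: "length A = r * (2*M)" by (simp add: A_def length_concat sum_list_replicate)
  have lB: "length B = r * (2*M)" by (simp add: B_def)
  have ab: "A ! i = B ! (psig r M i)" if i: "i < r * (2*M)" for i
  proof -
    have ll: "length (replicate M c1 @ replicate M c2) = 2*M" by simp
    have "A ! i = (replicate M c1 @ replicate M c2) ! (i mod length (replicate M c1 @ replicate M c2))"
      unfolding A_def by (rule nth_concat_replicate) (use i in \<open>simp only: ll\<close>)
    hence "A ! i = (replicate M c1 @ replicate M c2) ! (i mod (2*M))" by (simp only: ll)
    also have "\<dots> = (if i mod (2*M) < M then c1 else c2)"
    proof -
      have "i mod (2*M) < 2*M" using M by simp
      hence "i mod (2*M) - M < M" by simp
      thus ?thesis by (simp add: nth_append)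
    qed
    also have "\<dots> = B ! (psig r M i)"
      using psig_props[OF M i] by (auto simp: B_def nth_append)
    finally show ?thesis .
  qed
  show "isometric A B" by (rule iso_perm[OF psig_bij[OF M] lA lB ab])
  show "isometric B A" by (rule iso_perm_sym[OF psig_bij[OF M] lA lB ab])
qed




lemma sos_iff: "sum_of_squares n y \<longleftrightarrow> (\<exists>x. y = sq n x)"
  by (simp add: sum_of_squares_def sq_def)

lemma sos_mult:
  fixes c d :: "'a::field"
  assumes "sum_of_squares (2^k) c" "sum_of_squares (2^k) d"
  shows "sum_of_squares (2^k) (c * d)"
proof -
  obtain u where u: "c = sq (2^k) u" using assms(1) by (auto simp: sos_iff)
  obtain z where z: "d = sq (2^k) z" using assms(2) by (auto simp: sos_iff)
  obtain T where "\<forall>z. sq (2^k) (T z) = sq (2^k) u * sq (2^k) z" using round[of k u] by blast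
  hence "c * d = sq (2^k) (T z)" using u z by simp
  thus ?thesis by (auto simp: sos_iff)
qed

lemma sos_square:
  fixes w :: "'a::field"
  assumes "1 \<le> n" shows "sum_of_squares n (w^2)"
proof -
  have "sq n (\<lambda>i. if i = 0 then w else 0) = (\<Sum>i<n. if i = 0 then w^2 else 0)"
    unfolding sq_def by (rule sum.cong) auto
  also have "\<dots> = w^2" using assms by simp
  finally show ?thesis unfolding sos_iff by metis
qed

lemma sos_inv:
  fixes c :: "'a::field"
  assumes "sum_of_squares (2^k) c" shows "sum_of_squares (2^k) (1 / c)"
proof -
  have "1 / c = c * (1 / c)^2" by (cases "c = 0") (simp_all add: power2_eq_square)
  moreover have "sum_of_squares (2^k) (c * (1/c)^2)"
    by (rule sos_mult[OF assms sos_square]) simp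
  ultimately show ?thesis by simp
qed

lemma sos_mono:
  fixes y :: "'a::field"
  assumes "n \<le> m" "sum_of_squares n y" shows "sum_of_squares m y"
proof -
  obtain x where x: "y = sq n x" using assms(2) by (auto simp: sos_iff)
  obtain d where m: "m = n + d" using assms(1) le_Suc_ex by blast
  define x' where "x' = (\<lambda>i. if i < n then x i else 0)"
  have "sq m x' = sq n x' + (\<Sum>i<d. (x' (i + n))^2)" unfolding m sq_def by (rule sum_split_add)
  also have "\<dots> = sq n x" by (simp add: x'_def sq_def)
  finally show ?thesis using x unfolding sos_iff by metis
qed

definition psi :: "nat \<Rightarrow> 'a::field \<Rightarrow> 'a list" where
  "psi N s = replicate N 1 @ replicate N (- s)"

lemma qval_psi: "qval (psi N s) x = sq N x - s * sq N (hi N x)"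
  by (simp add: psi_def qval_append qval_replicate)

lemma zero_from_halves:
  fixes x :: "nat \<Rightarrow> 'a::field"
  assumes "\<forall>i<N. x i = 0" "\<forall>i<N. hi N x i = 0" shows "\<forall>i<N + N. x i = 0"
proof (intro allI impI)
  fix i assume i: "i < N + N"
  show "x i = 0"
  proof (cases "i < N")
    case True thus ?thesis using assms(1) by simp
  next
    case False
    hence "hi N x (i - N) = 0" using assms(2) i by simp
    thus ?thesis using False by (simp add: hi_def)
  qed
qed

lemma psi_aniso:
  fixes s :: "'a::field" and P :: "'a set"
  assumes P: "is_ordering P" and ns: "\<not> sum_of_squares (2^j) s"
  shows "anisotropic (psi (2^j) s)"
  unfolding anisotropic_def isotropic_def
proof
  assume "\<exists>x. (\<exists>i<length (psi (2^j) s). x i \<noteq> 0) \<and> qval (psi (2^j) s) x = 0"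
  then obtain x i where i: "i < 2^j + 2^j" "x i \<noteq> 0" and q: "qval (psi (2^j) s) x = 0"
    by (auto simp: psi_def)
  define N :: nat where "N = 2^j"
  have q': "sq N x = s * sq N (hi N x)" using q by (simp add: qval_psi N_def)
  show False
  proof (cases "sq N (hi N x) = 0")
    case True
    hence "sq N x = 0" using q' by simp
    hence "\<forall>i<N + N. x i = 0"
      using zero_from_halves ord_sq_zero[OF P] True by metis
    thus False using i N_def by simp
  next
    case False
    have "s = sq N x * (1 / sq N (hi N x))" using q' False by simp
    moreover have "sum_of_squares N (sq N x * (1 / sq N (hi N x)))"
    proof -
      have a: "sum_of_squares (2^j) (sq (2^j) x)" unfolding sos_iff by blast
      have b: "sum_of_squares (2^j) (1 / sq (2^j) (hi (2^j) x))" by (rule sos_inv) (unfold sos_iff, blast)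
      show ?thesis unfolding N_def by (rule sos_mult[OF a b])
    qed
    ultimately show False using ns N_def by simp
  qed
qed

lemma hyp_of_iso: "isometric a b \<Longrightarrow> hyperbolic b \<Longrightarrow> hyperbolic a"
  unfolding hyperbolic_def using iso_trans by blast

lemma O_hyp: "hyperbolic (replicate N (1::'a::field) @ replicate N (-1))"
proof -
  have "isometric (replicate (N * 1) (1::'a) @ replicate (N * 1) (-1))
          (concat (replicate N (replicate 1 1 @ replicate 1 (-1))))"
    by (rule iso_interleave(2)) simp
  thus ?thesis unfolding hyperbolic_def by auto
qed

lemma psi_torsion:
  fixes s :: "'a::field" and P :: "'a set"
  assumes P: "is_ordering P" and s0: "s \<noteq> 0" and ss: "sum_of_squares n0 s"
  shows "torsion_form (psi (2^j) s)"
proof -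
  define r :: nat where "r = 2^n0"
  define N :: nat where "N = 2^(n0 + j)"
  have rN: "r * 2^j = N" by (simp add: r_def N_def power_add)
  have "n0 \<le> 2^n0" using less_exp[of n0] by simp
  also have "\<dots> \<le> N" unfolding N_def by (rule power_increasing) simp_all
  finally have sN: "sum_of_squares N s" using sos_mono ss by blast
  have "sum_of_squares N (1 / s)" using sos_inv sN unfolding N_def by blast
  then obtain u where u: "1 / s = sq N u" by (auto simp: sos_iff)
  obtain R where R: "linr N N R" "\<And>z. sq N (R z) = sq N u * sq N z"
    using round[of "n0 + j" u] N_def by blast
  define L where "L = (\<lambda>x. join N x (R (hi N x)))"
  have isoO: "isometric (psi N s) (replicate N 1 @ replicate N (-1))"
  proof (rule iso_fun[where L = L and n = "N + N"])
    have "linr (N + N) (N + N) L" unfolding L_def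
      by (rule linr_join[OF linr_id' linr_comp[OF linr_hi R(1)]]) simp
    thus "lin (N + N) L" by (simp add: lin_linr)
    show "length (psi N s) = N + N" by (simp add: psi_def)
    show "length (replicate N 1 @ replicate N (-1::'a)) = N + N" by simp
  next
    fix x assume z: "\<And>i. i < N + N \<Longrightarrow> L x i = 0"
    have x1: "\<forall>i<N. x i = 0"
    proof (intro allI impI)
      fix i assume "i < N" thus "x i = 0" using z[of i] by (simp add: L_def join_def)
    qed
    have "\<forall>i<N. R (hi N x) i = 0"
    proof (intro allI impI)
      fix i assume "i < N" thus "R (hi N x) i = 0" using z[of "i + N"] by (simp add: L_def join_def)
    qed
    hence "sq N (R (hi N x)) = 0" by (simp add: sq_def)
    hence "(1 / s) * sq N (hi N x) = 0" using R(2) u by simp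
    hence "sq N (hi N x) = 0" using s0 by simp
    hence "\<forall>i<N. hi N x i = 0" using ord_sq_zero[OF P] by blast
    thus "\<forall>j<N + N. x j = 0" using zero_from_halves x1 by blast
  next
    fix x
    have "sq N (L x) = sq N x" unfolding L_def by (rule sq_cong) (simp add: join_def)
    moreover have "hi N (L x) = R (hi N x)" by (simp add: L_def)
    ultimately have "qval (psi N s) (L x) = sq N x - s * ((1 / s) * sq N (hi N x))"
      using R(2) u by (simp add: qval_psi)
    also have "\<dots> = sq N x - sq N (hi N x)" using s0 by simp
    finally show "qval (psi N s) (L x) = qval (replicate N 1 @ replicate N (-1)) x"
      by (simp add: qval_append qval_replicate)
  qed
  have "isometric (concat (replicate r (replicate (2^j) 1 @ replicate (2^j) (-s))))
          (replicate (r * 2^j) 1 @ replicate (r * 2^j) (-s))"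
    by (rule iso_interleave(1)) simp
  hence "isometric (concat (replicate r (psi (2^j) s))) (psi N s)"
    using rN by (simp add: psi_def)
  hence "hyperbolic (concat (replicate r (psi (2^j) s)))"
    using hyp_of_iso[OF iso_trans[OF _ isoO] O_hyp] by blast
  moreover have "r \<ge> 1" by (simp add: r_def)
  ultimately show ?thesis unfolding torsion_form_def by blast
qed




lemma qval_pair: "qval [c, d] x = c * (x 0)^2 + d * (x 1)^2"
  by (simp add: qval_def numeral_2_eq_2)

lemma hyp_isotropic:
  fixes a :: "'a::field list"
  assumes h: "hyperbolic a" and ne: "a \<noteq> []"
  shows "isotropic a"
proof -
  obtain k where iso: "isometric a (concat (replicate k [1, -1]))" using h by (auto simp: hyperbolic_def)
  obtain L where L: "lin (length a) L" "length (concat (replicate k [1::'a, -1])) = length a"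
    "\<And>x. (\<And>i. i < length a \<Longrightarrow> L x i = 0) \<Longrightarrow> (\<forall>j<length a. x j = 0)"
    "\<And>x. qval a (L x) = qval (concat (replicate k [1, -1])) x"
    using isometricE[OF iso] by blast
  have "k \<noteq> 0"
  proof
    assume "k = 0" hence "length a = 0" using L(2) by simp
    thus False using ne by simp
  qed
  then obtain k' where k: "k = Suc k'" using not0_implies_Suc by blast
  define x :: "nat \<Rightarrow> 'a" where "x = (\<lambda>i. if i < 2 then 1 else 0)"
  have hx: "hi (length [1::'a, -1]) x = (\<lambda>i. 0)" by (simp add: hi_def x_def fun_eq_iff)
  have "qval (concat (replicate k [1::'a, -1])) x = qval [1, -1] x + qval (concat (replicate k' [1::'a, -1])) (\<lambda>i. 0)"
    unfolding k using qval_append[of "[1::'a, -1]" "concat (replicate k' [1, -1])" x] hx by simp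
  also have "\<dots> = 0" by (simp add: qval_pair qval_zero x_def)
  finally have q0: "qval a (L x) = 0" using L(4) by simp
  have "\<exists>i<length a. L x i \<noteq> 0"
  proof (rule ccontr)
    assume "\<not> (\<exists>i<length a. L x i \<noteq> 0)"
    hence "\<forall>j<length a. x j = 0" using L(3) by blast
    moreover have "0 < length a" using ne by simp
    ultimately have "x 0 = 0" by blast
    thus False by (simp add: x_def)
  qed
  thus ?thesis unfolding isotropic_def using q0 by blast
qed

lemma qval_neg: "qval (map uminus a) x = - qval a x"
  by (simp add: qval_def sum_negf)

lemma alg_hyp:
  fixes a u v :: "'a::field"
  assumes a: "a \<noteq> 0" and two: "(2::'a) \<noteq> 0"
  shows "a * ((((u - v) / a + (u + v)) / 2)^2 - (((u + v) - (u - v) / a) / 2)^2) = u^2 - v^2"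
proof -
  define p where "p = (u - v) / a"
  define q where "q = u + v"
  have "((p + q) / 2)^2 - ((q - p) / 2)^2 = (p + q)^2 / 2^2 - (q - p)^2 / 2^2"
    by (simp only: power_divide)
  also have "\<dots> = ((p + q)^2 - (q - p)^2) / 2^2" by (rule diff_divide_distrib[symmetric])
  also have "(p + q)^2 - (q - p)^2 = 2^2 * (p * q)" by (simp add: power2_eq_square algebra_simps)
  also have "2^2 * (p * q) / 2^2 = p * q"
  proof -
    have "(2::'a)^2 \<noteq> 0" by (rule power_not_zero[OF two])
    thus ?thesis by (rule nonzero_mult_div_cancel_left)
  qed
  finally have e: "((p + q) / 2)^2 - ((q - p) / 2)^2 = p * q" .
  have "a * (p * q) = (u - v) * (u + v)" using a by (simp add: p_def q_def)
  also have "\<dots> = u^2 - v^2" by (simp add: power2_eq_square algebra_simps)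
  finally show ?thesis using e by (simp add: p_def q_def)
qed

lemma neg_hyp:
  fixes a :: "'a::field list"
  assumes fa: "is_form a" and two: "(2::'a) \<noteq> 0"
  shows "hyperbolic (a @ map uminus a)"
proof -
  define n where "n = length a"
  have anz: "\<And>i. i < n \<Longrightarrow> a ! i \<noteq> 0" using fa by (auto simp: is_form_def n_def)
  define L where "L = (\<lambda>x::nat \<Rightarrow> 'a. \<lambda>i. if i < n
      then ((x i - x (i + n)) / a ! i + (x i + x (i + n))) / 2
      else ((x (i - n) + x i) - (x (i - n) - x i) / a ! (i - n)) / 2)"
  have iso: "isometric (a @ map uminus a) (replicate n 1 @ replicate n (-1))"
  proof (rule iso_fun[where L = L and n = "n + n"])
    show "lin (n + n) L"
    proof (rule linI)
      fix x y :: "nat \<Rightarrow> 'a" and i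
      show "L (\<lambda>j. x j + y j) i = L x i + L y i"
        by (simp add: L_def add_divide_distrib diff_divide_distrib algebra_simps)
    next
      fix c and x :: "nat \<Rightarrow> 'a" and i
      show "L (\<lambda>j. c * x j) i = c * L x i"
        by (simp add: L_def times_divide_eq_right algebra_simps)
    next
      fix x y :: "nat \<Rightarrow> 'a" and i assume xy: "\<And>j. j < n + n \<Longrightarrow> x j = y j" and i: "i < n + n"
      show "L x i = L y i" using xy i by (simp add: L_def)
    qed
    show "length (a @ map uminus a) = n + n" by (simp add: n_def)
    show "length (replicate n 1 @ replicate n (-1::'a)) = n + n" by simp
  next
    fix x assume z: "\<And>i. i < n + n \<Longrightarrow> L x i = 0"
    show "\<forall>j<n + n. x j = 0"
    proof (intro allI impI)
      fix j assume j: "j < n + n"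
      define i where "i = (if j < n then j else j - n)"
      have i: "i < n" using j unfolding i_def by arith
      define p where "p = (x i - x (i + n)) / a ! i"
      define q where "q = x i + x (i + n)"
      have z1: "(p + q) / 2 = 0" using z[of i] i by (simp add: L_def p_def q_def)
      have z2: "(q - p) / 2 = 0" using z[of "i + n"] i by (simp add: L_def p_def q_def)
      have "p + q = 0" "q - p = 0" using z1 z2 two by simp_all
      hence "p = 0" "q = 0" using two by (simp_all add: algebra_simps)
      hence "x i - x (i + n) = 0" "x i + x (i + n) = 0" using anz[OF i] by (simp_all add: p_def q_def)
      hence "x i = 0 \<and> x (i + n) = 0" using two by (metis add_diff_cancel_left' diff_zero eq_iff_diff_eq_0 mult_2 mult_eq_0_iff)
      thus "x j = 0" using j by (auto simp: i_def split: if_splits)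
    qed
  next
    fix x
    have "qval (a @ map uminus a) (L x) = qval a (L x) - qval a (hi n (L x))"
      by (simp add: qval_append qval_neg n_def)
    also have "\<dots> = (\<Sum>i<n. a ! i * ((L x i)^2 - (hi n (L x) i)^2))"
      by (simp add: qval_def n_def sum_subtractf right_diff_distrib)
    also have "\<dots> = (\<Sum>i<n. (x i)^2 - (x (i + n))^2)"
    proof (rule sum.cong)
      fix i assume "i \<in> {..<n}"
      hence i: "i < n" by simp
      have L1: "L x i = ((x i - x (i + n)) / a ! i + (x i + x (i + n))) / 2" using i by (simp add: L_def)
      have L2: "hi n (L x) i = ((x i + x (i + n)) - (x i - x (i + n)) / a ! i) / 2" using i by (simp add: L_def hi_def)
      show "a ! i * ((L x i)^2 - (hi n (L x) i)^2) = (x i)^2 - (x (i + n))^2"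
        unfolding L1 L2 by (rule alg_hyp[OF anz[OF i] two])
    qed simp
    also have "\<dots> = qval (replicate n 1 @ replicate n (-1)) x"
      by (simp add: qval_append qval_replicate sq_def hi_def sum_subtractf)
    finally show "qval (a @ map uminus a) (L x) = qval (replicate n 1 @ replicate n (-1)) x" .
  qed
  show ?thesis by (rule hyp_of_iso[OF iso O_hyp])
qed

lemma pfister_minus_ones: "pfister (replicate j (-1::'a::field)) = replicate (2^j) 1"
  by (induction j) (simp_all add: replicate_add[symmetric] mult_2)

lemma pfister_psi: "pfister (s # replicate j (-1::'a::field)) = psi (2^j) s"
  by (simp add: pfister_minus_ones psi_def)

lemma psi_form: "s \<noteq> 0 \<Longrightarrow> is_form (psi N (s::'a::field))"
  by (auto simp: is_form_def psi_def)

lemma map_one: "map ((*) (1::'a::field)) l = l" by (induct l) simp_all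

lemma psi_in_Ik:
  fixes s :: "'a::field"
  assumes s0: "s \<noteq> 0" and two: "(2::'a) \<noteq> 0"
  shows "in_Ik (Suc j) (psi (2^j) s)"
  unfolding in_Ik_def
proof (intro exI[of _ "[(1, s # replicate j (-1))]"] conjI)
  show "\<forall>(c, as)\<in>set [(1::'a, s # replicate j (-1))]. c \<noteq> 0 \<and> length as = Suc j \<and> (\<forall>x\<in>set as. x \<noteq> 0)"
    using s0 by auto
  have "witt_equiv (psi (2^j) s) (psi (2^j) s)"
    unfolding witt_equiv_def by (rule neg_hyp[OF psi_form[OF s0] two])
  thus "witt_equiv (psi (2 ^ j) s)
     (concat (map (\<lambda>(c, as). map ((*) c) (pfister as)) [(1, s # replicate j (-1))]))"
    by (simp del: pfister.simps add: pfister_psi map_one)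
qed




lemma qval_lincomb:
  "qval q (\<lambda>i. s * x i + t * y i) = s^2 * qval q x + 2 * s * t * (\<Sum>i<length q. q ! i * x i * y i) + t^2 * qval q y"
proof -
  have "qval q (\<lambda>i. s * x i + t * y i) = (\<Sum>i<length q. s^2 * (q ! i * (x i)^2) + 2 * s * t * (q ! i * x i * y i) + t^2 * (q ! i * (y i)^2))"
    unfolding qval_def by (rule sum.cong) (simp_all add: power2_eq_square algebra_simps)
  thus ?thesis by (simp add: qval_def sum.distrib sum_distrib_left)
qed

lemma sos_two: "sum_of_squares 2 (b^2 + c^2)"
proof -
  have "b^2 + c^2 = sq 2 (\<lambda>i. if i = 0 then b else c)" by (simp add: sq_def numeral_2_eq_2)
  thus ?thesis unfolding sos_iff by blast
qed

lemma sos_one: "sum_of_squares 1 y \<Longrightarrow> \<exists>w. y = w^2"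
  by (auto simp: sos_iff sq_def)

lemma solve_lin:
  fixes c s :: "'a::field"
  assumes "c \<noteq> 0" "\<not> s * x + c * y \<noteq> 0" shows "y = - (s / c) * x"
proof -
  have "c * y = - (s * x)" using assms(2) by (simp add: eq_neg_iff_add_eq_0 add.commute)
  have "y = (c * y) / c" using assms(1) by simp
  also have "\<dots> = - (s * x) / c" using \<open>c * y = - (s * x)\<close> by simp
  finally show ?thesis by simp
qed

lemma pyth_double:
  fixes q :: "'a::field list" and P :: "'a set"
  assumes P: "is_ordering P" and pyth: "\<And>y::'a. (\<exists>n. sum_of_squares n y) \<Longrightarrow> sum_of_squares 1 y"
    and an: "anisotropic q"
  shows "anisotropic (q @ q)"
  unfolding anisotropic_def
proof
  assume "isotropic (q @ q)"
  then obtain z i where i: "i < length q + length q" "z i \<noteq> 0" and qz: "qval (q @ q) z = 0"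
    by (auto simp: isotropic_def)
  define n where "n = length q"
  define x where "x = z"
  define y where "y = hi n z"
  define c where "c = qval q x"
  have "qval q x + qval q y = 0" using qz unfolding qval_append x_def y_def n_def .
  hence qy: "qval q y = - c" unfolding c_def by (simp only: add_eq_0_iff)
  have aniso: "\<And>v. (\<exists>i<n. v i \<noteq> 0) \<Longrightarrow> qval q v \<noteq> 0"
    using an unfolding anisotropic_def isotropic_def n_def by blast
  have xy: "(\<exists>i<n. x i \<noteq> 0) \<or> (\<exists>i<n. y i \<noteq> 0)"
  proof (cases "i < n")
    case True thus ?thesis using i by (auto simp: x_def)
  next
    case False
    hence "i - n < n" "y (i - n) \<noteq> 0" using i by (auto simp: y_def hi_def n_def)
    thus ?thesis by blast
  qed
  show False
  proof (cases "c = 0")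
    case True
    from xy show False
    proof
      assume "\<exists>i<n. x i \<noteq> 0" hence "qval q x \<noteq> 0" by (rule aniso)
      thus False using True c_def by simp
    next
      assume "\<exists>i<n. y i \<noteq> 0" hence "qval q y \<noteq> 0" by (rule aniso)
      thus False using True qy by simp
    qed
  next
    case cnz: False
    define \<beta> where "\<beta> = (\<Sum>i<length q. q ! i * x i * y i)"
    have "sum_of_squares 1 (\<beta>^2 + c^2)" by (rule pyth) (use sos_two in blast)
    then obtain \<delta> where d: "\<beta>^2 + c^2 = \<delta>^2" using sos_one by blast
    define s where "s = \<delta> - \<beta>"
    define v where "v = (\<lambda>i. s * x i + c * y i)"
    have "qval q v = s^2 * c + 2 * s * c * \<beta> + c^2 * (- c)"
      unfolding v_def qval_lincomb c_def[symmetric] \<beta>_def[symmetric] qy by simp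
    also have "\<dots> = c * (\<delta>^2 - \<beta>^2 - c^2)" unfolding s_def by (simp add: power2_eq_square algebra_simps)
    also have "\<dots> = 0" using d[symmetric] by simp
    finally have qv: "qval q v = 0" .
    have "\<exists>i<n. v i \<noteq> 0"
    proof (rule ccontr)
      assume "\<not> (\<exists>i<n. v i \<noteq> 0)"
      hence "\<forall>i<n. y i = (- (s / c)) * x i" using solve_lin[OF cnz] unfolding v_def by blast
      hence "qval q y = qval q (\<lambda>i. (- (s / c)) * x i)" by (intro qval_cong) (simp add: n_def)
      also have "\<dots> = (- (s / c))^2 * c" unfolding c_def by (rule qval_scale)
      also have "\<dots> = (s / c)^2 * c" by simp
      finally have "- c = (s / c)^2 * c" using qy by simp
      hence e: "(s / c)^2 * c = - c" by simp
      have "((s / c)^2 + 1) * c = (s / c)^2 * c + c" by (simp add: distrib_right)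
      also have "\<dots> = 0" using e by simp
      finally have "((s / c)^2 + 1) * c = 0" .
      hence "(s / c)^2 + 1 = 0" using cnz by simp
      hence "1 + (s / c)^2 = 0" by (simp add: add.commute)
      thus False using ord_one_plus_sq[OF P] by blast
    qed
    hence "qval q v \<noteq> 0" by (rule aniso)
    thus False using qv by simp
  qed
qed

lemma aniso_pow:
  fixes q :: "'a::field list" and P :: "'a set"
  assumes P: "is_ordering P" and pyth: "\<And>y::'a. (\<exists>n. sum_of_squares n y) \<Longrightarrow> sum_of_squares 1 y"
    and an: "anisotropic q"
  shows "anisotropic (concat (replicate (2^j) q))"
proof (induction j)
  case 0 thus ?case using an by simp
next
  case (Suc j)
  have "concat (replicate (2^Suc j) q) = concat (replicate (2^j) q) @ concat (replicate (2^j) q)"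
    by (simp add: mult_2 replicate_add)
  thus ?case using pyth_double[OF P pyth Suc.IH] by simp
qed

lemma iso_prefix:
  assumes "isotropic a" shows "isotropic (a @ b)"
proof -
  obtain x i where i: "i < length a" "x i \<noteq> 0" and q: "qval a x = 0"
    using assms by (auto simp: isotropic_def)
  define x' where "x' = (\<lambda>i. if i < length a then x i else 0)"
  have "qval (a @ b) x' = qval a x' + qval b (hi (length a) x')" by (rule qval_append)
  also have "qval a x' = qval a x" by (rule qval_cong) (simp add: x'_def)
  also have "hi (length a) x' = (\<lambda>i. 0)" by (simp add: x'_def hi_def fun_eq_iff)
  finally have "qval (a @ b) x' = 0" using q by (simp add: qval_zero)
  moreover have "i < length (a @ b)" "x' i \<noteq> 0" using i by (auto simp: x'_def)
  ultimately show ?thesis unfolding isotropic_def by blast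
qed

lemma pyth_torsion_empty:
  fixes a :: "'a::field list" and P :: "'a set"
  assumes P: "is_ordering P" and pyth: "\<And>y::'a. (\<exists>n. sum_of_squares n y) \<Longrightarrow> sum_of_squares 1 y"
    and an: "anisotropic a" and t: "torsion_form a"
  shows "a = []"
proof (rule ccontr)
  assume ne: "a \<noteq> []"
  obtain m where m: "m \<ge> 1" "hyperbolic (concat (replicate m a))" using t by (auto simp: torsion_form_def)
  have "concat (replicate m a) \<noteq> []" using ne m(1) by (cases m) auto
  hence iso: "isotropic (concat (replicate m a))" by (rule hyp_isotropic[OF m(2)])
  have "m \<le> 2^m" using less_exp[of m] by simp
  hence "concat (replicate (2^m) a) = concat (replicate m a) @ concat (replicate (2^m - m) a)"
    by (metis concat_append le_add_diff_inverse replicate_add)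
  hence "isotropic (concat (replicate (2^m) a))" using iso_prefix[OF iso] by simp
  thus False using aniso_pow[OF P pyth an, of m] unfolding anisotropic_def by simp
qed




lemma homog:
  fixes A :: "nat \<Rightarrow> nat \<Rightarrow> 'a::field"
  assumes "finite I" "finite J" "card I < card J"
  shows "\<exists>x. (\<forall>j. j \<notin> J \<longrightarrow> x j = 0) \<and> (\<exists>j\<in>J. x j \<noteq> 0) \<and> (\<forall>i\<in>I. (\<Sum>j\<in>J. A i j * x j) = 0)"
  using assms
proof (induction I arbitrary: J A rule: finite_induct)
  case empty
  hence "J \<noteq> {}" by auto
  then obtain j0 where j0: "j0 \<in> J" by blast
  define x :: "nat \<Rightarrow> 'a" where "x = (\<lambda>j. if j = j0 then 1 else 0)"
  have "\<forall>j. j \<notin> J \<longrightarrow> x j = 0" using j0 by (auto simp: x_def)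
  moreover have "\<exists>j\<in>J. x j \<noteq> 0" using j0 by (auto simp: x_def)
  ultimately show ?case by blast
next
  case (insert i0 I)
  have cI: "card (insert i0 I) = Suc (card I)" using insert.hyps by simp
  show ?case
  proof (cases "\<forall>j\<in>J. A i0 j = 0")
    case True
    have "card I < card J" using insert.prems cI by simp
    then obtain x where x: "\<forall>j. j \<notin> J \<longrightarrow> x j = 0" "\<exists>j\<in>J. x j \<noteq> 0" "\<forall>i\<in>I. (\<Sum>j\<in>J. A i j * x j) = 0"
      using insert.IH[OF insert.prems(1)] by blast
    have "(\<Sum>j\<in>J. A i0 j * x j) = 0" using True by simp
    thus ?thesis using x by blast
  next
    case False
    then obtain j0 where j0: "j0 \<in> J" "A i0 j0 \<noteq> 0" by blast
    define J' where "J' = J - {j0}"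
    have fJ': "finite J'" using insert.prems(1) by (simp add: J'_def)
    have cJ': "card J' = card J - 1" using j0 insert.prems(1) by (simp add: J'_def)
    have "card I < card J'" using cJ' cI insert.prems(2) by simp
    define A' where "A' = (\<lambda>i j. A i j - A i j0 * A i0 j / A i0 j0)"
    obtain x' where x': "\<forall>j. j \<notin> J' \<longrightarrow> x' j = 0" "\<exists>j\<in>J'. x' j \<noteq> 0" "\<forall>i\<in>I. (\<Sum>j\<in>J'. A' i j * x' j) = 0"
      using insert.IH[OF fJ' \<open>card I < card J'\<close>, of A'] by blast
    define S where "S = (\<Sum>j\<in>J'. A i0 j * x' j)"
    define x where "x = x'(j0 := - S / A i0 j0)"
    have xJ': "\<And>j. j \<in> J' \<Longrightarrow> x j = x' j" by (simp add: x_def J'_def)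
    have split: "(\<Sum>j\<in>J. A i j * x j) = A i j0 * (- S / A i0 j0) + (\<Sum>j\<in>J'. A i j * x' j)" for i
    proof -
      have "(\<Sum>j\<in>J. A i j * x j) = A i j0 * x j0 + (\<Sum>j\<in>J'. A i j * x j)"
        unfolding J'_def by (rule sum.remove[OF insert.prems(1) j0(1)])
      also have "(\<Sum>j\<in>J'. A i j * x j) = (\<Sum>j\<in>J'. A i j * x' j)" by (rule sum.cong) (simp_all add: xJ')
      finally show ?thesis by (simp add: x_def)
    qed
    have "\<forall>j. j \<notin> J \<longrightarrow> x j = 0" using x'(1) j0(1) by (auto simp: x_def J'_def)
    moreover have "\<exists>j\<in>J. x j \<noteq> 0"
    proof -
      obtain j where j: "j \<in> J'" "x' j \<noteq> 0" using x'(2) by blast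
      have "x j \<noteq> 0" using xJ'[OF j(1)] j(2) by simp
      moreover have "j \<in> J" using j(1) by (simp add: J'_def)
      ultimately show ?thesis by blast
    qed
    moreover have "\<forall>i\<in>insert i0 I. (\<Sum>j\<in>J. A i j * x j) = 0"
    proof
      fix i assume "i \<in> insert i0 I"
      then consider "i = i0" | "i \<in> I" by blast
      thus "(\<Sum>j\<in>J. A i j * x j) = 0"
      proof cases
        case 1 thus ?thesis unfolding split using j0(2) by (simp add: S_def)
      next
        case 2
        have "0 = (\<Sum>j\<in>J'. A' i j * x' j)" using x'(3) 2 by simp
        also have "\<dots> = (\<Sum>j\<in>J'. A i j * x' j - (A i j0 / A i0 j0) * (A i0 j * x' j))"
          by (rule sum.cong) (simp_all add: A'_def algebra_simps)
        also have "\<dots> = (\<Sum>j\<in>J'. A i j * x' j) - (A i j0 / A i0 j0) * S"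
          by (simp add: S_def sum_subtractf sum_distrib_left)
        finally have "(\<Sum>j\<in>J'. A i j * x' j) = (A i j0 / A i0 j0) * S" by simp
        thus ?thesis unfolding split by simp
      qed
    qed
    ultimately show ?thesis by blast
  qed
qed

lemma card_compl: "card {i. i < n \<and> Q i} + card {i. i < n \<and> \<not> Q i} = n"
proof -
  have "{i. i < n \<and> Q i} \<union> {i. i < n \<and> \<not> Q i} = {..<n}" by auto
  moreover have "card ({i. i < n \<and> Q i} \<union> {i. i < n \<and> \<not> Q i}) = card {i. i < n \<and> Q i} + card {i. i < n \<and> \<not> Q i}"
    by (rule card_Un_disjoint) auto
  ultimately show ?thesis by simp
qed

lemma sylv_le:
  fixes a b :: "'a::field list" and P :: "'a set"
  assumes P: "is_ordering P" and fa: "is_form a" and fb: "is_form b"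
    and la: "length a = n" and lb: "length b = n"
    and q: "\<And>x. qval a (linmap n M x) = qval b x"
  shows "card {i. i < n \<and> a ! i \<in> P} \<le> card {j. j < n \<and> b ! j \<in> P}"
proof (rule ccontr)
  assume "\<not> ?thesis"
  hence lt: "card {j. j < n \<and> b ! j \<in> P} < card {i. i < n \<and> a ! i \<in> P}" by simp
  define I where "I = {i. i < n \<and> a ! i \<notin> P}"
  define J where "J = {j. j < n \<and> b ! j \<notin> P}"
  have "card I < card J" using lt card_compl[of n "\<lambda>i. a ! i \<in> P"] card_compl[of n "\<lambda>i. b ! i \<in> P"]
    unfolding I_def J_def by linarith
  moreover have fI: "finite I" by (simp add: I_def)
  moreover have fJ: "finite J" by (simp add: J_def)
  ultimately obtain x where x: "\<forall>j. j \<notin> J \<longrightarrow> x j = 0" "\<exists>j\<in>J. x j \<noteq> 0" "\<forall>i\<in>I. (\<Sum>j\<in>J. M i j * x j) = 0"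
    using homog[of I J M] by blast
  have Jn: "J \<subseteq> {..<n}" by (auto simp: J_def)
  have lm: "linmap n M x i = (\<Sum>j\<in>J. M i j * x j)" for i
    unfolding linmap_def by (rule sum.mono_neutral_right) (use Jn x(1) in auto)
  have anz: "\<And>i. i < n \<Longrightarrow> a ! i \<noteq> 0" using fa la by (auto simp: is_form_def)
  have bnz: "\<And>i. i < n \<Longrightarrow> b ! i \<noteq> 0" using fb lb by (auto simp: is_form_def)
  define v where "v = qval b x"
  have vP: "v \<in> P"
  proof -
    have "v = (\<Sum>i<n. a ! i * (linmap n M x i)^2)" using q[of x] la by (simp add: v_def qval_def)
    also have "\<dots> \<in> P"
    proof (rule ord_sum[OF P])
      fix i assume i: "i \<in> {..<n}"
      show "a ! i * (linmap n M x i)^2 \<in> P"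
      proof (cases "a ! i \<in> P")
        case True show ?thesis by (rule ord_mult[OF P True ord_pow2[OF P]])
      next
        case False hence "i \<in> I" using i by (simp add: I_def)
        hence "linmap n M x i = 0" using lm x(3) by simp
        thus ?thesis using ord_zero[OF P] by simp
      qed
    qed
    finally show ?thesis .
  qed
  have terms: "\<And>j. j \<in> {..<n} \<Longrightarrow> - (b ! j) * (x j)^2 \<in> P"
  proof -
    fix j assume j: "j \<in> {..<n}"
    show "- (b ! j) * (x j)^2 \<in> P"
    proof (cases "b ! j \<in> P")
      case True hence "j \<notin> J" by (simp add: J_def)
      hence "x j = 0" using x(1) by simp
      thus ?thesis using ord_zero[OF P] by simp
    next
      case False show ?thesis by (rule ord_mult[OF P ord_tot[OF P False] ord_pow2[OF P]])
    qed
  qed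
  have mv: "- v = (\<Sum>j<n. - (b ! j) * (x j)^2)" by (simp add: v_def qval_def lb sum_negf)
  have "- v \<in> P" unfolding mv by (rule ord_sum[OF P terms])
  hence "v = 0" using ord_anti[OF P vP] by simp
  hence "(\<Sum>j<n. - (b ! j) * (x j)^2) = 0" using mv by simp
  hence all0: "\<forall>j\<in>{..<n}. - (b ! j) * (x j)^2 = 0"
  proof (intro ord_sum_zero[OF P])
    show "\<forall>j\<in>{..<n}. - (b ! j) * (x j)^2 \<in> P" using terms by blast
  qed simp_all
  obtain j where j: "j \<in> J" "x j \<noteq> 0" using x(2) by blast
  have "j < n" using j by (simp add: J_def)
  hence "- (b ! j) * (x j)^2 = 0" using all0 by simp
  thus False using bnz[OF \<open>j < n\<close>] j(2) by simp
qed

lemma sylv_eq: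
  fixes a b :: "'a::field list" and P :: "'a set"
  assumes P: "is_ordering P" and fa: "is_form a" and fb: "is_form b" and iso: "isometric a b"
  shows "card {i. i < length a \<and> a ! i \<in> P} = card {j. j < length b \<and> b ! j \<in> P}"
proof -
  define n where "n = length a"
  obtain M where lb: "length b = n" and q: "\<And>x. qval a (linmap n M x) = qval b x"
    using iso unfolding isometric_def n_def by metis
  have le1: "card {i. i < n \<and> a ! i \<in> P} \<le> card {j. j < n \<and> b ! j \<in> P}"
    by (rule sylv_le[OF P fa fb n_def[symmetric] lb q])
  have fa': "is_form (map uminus a)" using fa by (auto simp: is_form_def)
  have fb': "is_form (map uminus b)" using fb by (auto simp: is_form_def)
  have q': "\<And>x. qval (map uminus a) (linmap n M x) = qval (map uminus b) x" using q by (simp add: qval_neg)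
  have le2: "card {i. i < n \<and> map uminus a ! i \<in> P} \<le> card {j. j < n \<and> map uminus b ! j \<in> P}"
    by (rule sylv_le[OF P fa' fb' _ _ q']) (simp_all add: n_def lb)
  have neg: "\<And>c. c \<noteq> 0 \<Longrightarrow> (- c \<in> P) = (c \<notin> P)"
    using ord_anti[OF P] ord_tot[OF P] by blast
  have "{i. i < n \<and> map uminus a ! i \<in> P} = {i. i < n \<and> \<not> a ! i \<in> P}"
    using neg fa by (auto simp: is_form_def n_def)
  moreover have "{i. i < n \<and> map uminus b ! i \<in> P} = {i. i < n \<and> \<not> b ! i \<in> P}"
    using neg fb lb by (auto simp: is_form_def)
  ultimately have le2': "card {i. i < n \<and> \<not> a ! i \<in> P} \<le> card {i. i < n \<and> \<not> b ! i \<in> P}" using le2 by simp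
  show ?thesis using le1 le2' card_compl[of n "\<lambda>i. a ! i \<in> P"] card_compl[of n "\<lambda>i. b ! i \<in> P"]
    unfolding n_def[symmetric] lb by linarith
qed

lemma filter_concat_replicate:
  "length (filter Q (concat (replicate m a))) = m * length (filter Q a)"
  by (induction m) simp_all

lemma torsion_even:
  fixes a :: "'a::field list" and P :: "'a set"
  assumes P: "is_ordering P" and fa: "is_form a" and t: "torsion_form a"
  shows "even (length a)"
proof -
  obtain m k where m: "m \<ge> 1" and iso: "isometric (concat (replicate m a)) (concat (replicate k [1, -1]))"
    using t unfolding torsion_form_def hyperbolic_def by blast
  define A where "A = concat (replicate m a)"
  define H :: "'a list" where "H = concat (replicate k [1, -1])"
  have fA: "is_form A" using fa by (auto simp: is_form_def A_def)
  have fH: "is_form H" by (auto simp: is_form_def H_def)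
  have "card {i. i < length A \<and> A ! i \<in> P} = card {j. j < length H \<and> H ! j \<in> P}"
    by (rule sylv_eq[OF P fA fH]) (use iso in \<open>simp add: A_def H_def\<close>)
  hence c: "length (filter (\<lambda>x. x \<in> P) A) = length (filter (\<lambda>x. x \<in> P) H)"
    by (simp add: length_filter_conv_card)
  have cA: "length (filter (\<lambda>x. x \<in> P) A) = m * length (filter (\<lambda>x. x \<in> P) a)"
    unfolding A_def by (rule filter_concat_replicate)
  have cH: "length (filter (\<lambda>x. x \<in> P) H) = k * length (filter (\<lambda>x. x \<in> P) [1::'a, -1])"
    unfolding H_def by (rule filter_concat_replicate)
  have "length (filter (\<lambda>x. x \<in> P) [1::'a, -1]) = 1" using ord_one[OF P] ord_mone[OF P] by simp
  hence e1: "m * length (filter (\<lambda>x. x \<in> P) a) = k" using c cA cH by simp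
  have "length A = length H" using iso by (simp add: isometric_def A_def H_def)
  hence "m * length a = k * 2" by (simp add: A_def H_def length_concat sum_list_replicate)
  hence "m * length a = m * (2 * length (filter (\<lambda>x. x \<in> P) a))" using e1 by (simp add: algebra_simps)
  hence "length a = 2 * length (filter (\<lambda>x. x \<in> P) a)" using m by simp
  thus ?thesis by simp
qed




lemma sos_zero: "sum_of_squares N (0::'a::field)"
  unfolding sos_iff by (rule exI[of _ "\<lambda>_. 0"]) (simp add: sq_def)

lemma nonpyth_witness:
  assumes "\<not> pyth_prop TYPE('a::field) N" "N \<ge> 1"
  shows "\<exists>s::'a. (\<exists>n. sum_of_squares n s) \<and> \<not> sum_of_squares N s"
  using assms unfolding pyth_prop_def by blast

lemma pyth_prop_ge1: "pyth_prop T p \<Longrightarrow> p \<ge> 1"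
  by (simp add: pyth_prop_def)

lemma empty_form: "is_form ([]::'a::field list) \<and> anisotropic ([]::'a list) \<and> torsion_form ([]::'a list)"
proof -
  have "isometric ([]::'a list) (concat (replicate 0 [1, -1]))"
    by (simp add: isometric_def)
  hence "hyperbolic ([]::'a list)" unfolding hyperbolic_def by blast
  hence "torsion_form ([]::'a list)" unfolding torsion_form_def
    by (intro exI[of _ 1]) simp
  thus ?thesis by (simp add: is_form_def anisotropic_def isotropic_def)
qed

lemma psi_in_S:
  fixes P :: "'a::field set"
  assumes P: "is_ordering P" and np: "\<not> pyth_prop TYPE('a) (2^j)"
  shows "enat (2^Suc j) \<in> {enat (length a) | a :: 'a list. is_form a \<and> anisotropic a \<and> torsion_form a}"
proof -
  obtain s :: 'a where s: "\<exists>n. sum_of_squares n s" "\<not> sum_of_squares (2^j) s"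
    using nonpyth_witness[OF np] by auto
  have s0: "s \<noteq> 0" using s(2) sos_zero by metis
  obtain n0 where n0: "sum_of_squares n0 s" using s(1) by blast
  have "is_form (psi (2^j) s)" by (rule psi_form[OF s0])
  moreover have "anisotropic (psi (2^j) s)" by (rule psi_aniso[OF P s(2)])
  moreover have "torsion_form (psi (2^j) s)" by (rule psi_torsion[OF P s0 n0])
  moreover have "length (psi (2^j) s) = 2^Suc j" by (simp add: psi_def)
  ultimately show ?thesis by (metis (mono_tags, lifting) mem_Collect_eq)
qed

theorem theorem2p4:
  assumes "(2::'a::field) \<noteq> 0"
    and "real_field TYPE('a)"
  shows "(pythagoras_number TYPE('a), u_invariant TYPE('a)) \<in> admissible_pairs \<and>
         (\<forall>k\<ge>1. Ikt_zero TYPE('a) k \<longrightarrow> pythagoras_number TYPE('a) \<le> enat (2 ^ (k - 1)))"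
proof -
  note two = assms(1)
  obtain P :: "'a set" where P: "is_ordering P" using assms(2) by (auto simp: real_field_def)
  define S where "S = {enat (length a) | a :: 'a list. is_form a \<and> anisotropic a \<and> torsion_form a}"
  have uS: "u_invariant TYPE('a) = Sup S" by (simp add: u_invariant_def S_def)
  define p where "p = pythagoras_number TYPE('a)"
  define u where "u = u_invariant TYPE('a)"
  have p_le: "p \<le> enat N" if "pyth_prop TYPE('a) N" for N
  proof -
    have ex: "\<exists>p. pyth_prop TYPE('a) p" using that by blast
    have "(LEAST p. pyth_prop TYPE('a) p) \<le> N" using that by (rule Least_le)
    thus ?thesis using ex by (simp add: p_def pythagoras_number_def)
  qed
  have p_ge1: "p \<ge> 1"
  proof (cases "\<exists>q. pyth_prop TYPE('a) q")
    case True
    hence "pyth_prop TYPE('a) (LEAST q. pyth_prop TYPE('a) q)" by (rule LeastI_ex)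
    hence "(LEAST q. pyth_prop TYPE('a) q) \<ge> 1" by (rule pyth_prop_ge1)
    thus ?thesis using True by (simp add: p_def pythagoras_number_def one_enat_def)
  next
    case False thus ?thesis by (simp add: p_def pythagoras_number_def)
  qed
  have p_ge2: "p \<ge> 2" if np1: "\<not> pyth_prop TYPE('a) 1"
  proof (cases "\<exists>q. pyth_prop TYPE('a) q")
    case True
    hence L: "pyth_prop TYPE('a) (LEAST q. pyth_prop TYPE('a) q)" by (rule LeastI_ex)
    hence "(LEAST q. pyth_prop TYPE('a) q) \<ge> 1" by (rule pyth_prop_ge1)
    moreover have "(LEAST q. pyth_prop TYPE('a) q) \<noteq> 1" using L np1 by metis
    ultimately have "(LEAST q. pyth_prop TYPE('a) q) \<ge> 2" by simp
    thus ?thesis using True by (simp add: p_def pythagoras_number_def numeral_eq_enat)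
  next
    case False thus ?thesis by (simp add: p_def pythagoras_number_def)
  qed
  have part1: "(p, u) \<in> admissible_pairs"
  proof (cases "pyth_prop TYPE('a) 1")
    case True
    have pyth: "\<And>y::'a. (\<exists>n. sum_of_squares n y) \<Longrightarrow> sum_of_squares 1 y"
      using True unfolding pyth_prop_def by blast
    have "p \<le> 1" using p_le[OF True] by (simp add: one_enat_def)
    hence p1: "p = 1" using p_ge1 by simp
    have "S \<subseteq> {0}"
    proof
      fix e assume "e \<in> S"
      then obtain a :: "'a list" where a: "e = enat (length a)" "is_form a" "anisotropic a" "torsion_form a"
        by (auto simp: S_def)
      have "a = []" by (rule pyth_torsion_empty[OF P pyth a(3) a(4)])
      thus "e \<in> {0}" using a(1) by (simp add: zero_enat_def)
    qed
    hence "Sup S \<le> Sup {0::enat}" by (rule Sup_subset_mono)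
    hence "Sup S \<le> 0" by simp
    hence "u = 0" using uS u_def by simp
    thus ?thesis using p1 by (simp add: admissible_pairs_def)
  next
    case np1: False
    have p2: "p \<ge> 2" by (rule p_ge2[OF np1])
    show ?thesis
    proof (cases "u = \<infinity>")
      case True thus ?thesis using p2 by (simp add: admissible_pairs_def)
    next
      case False
      then obtain U where U: "u = enat U" by (cases u) auto
      have upper: "enat (2^Suc j) \<le> u" if "\<not> pyth_prop TYPE('a) (2^j)" for j
        using psi_in_S[OF P that] uS u_def S_def by (simp add: Sup_upper)
      have ex: "\<exists>j. pyth_prop TYPE('a) (2^j)"
      proof (rule ccontr)
        assume "\<not> (\<exists>j. pyth_prop TYPE('a) (2^j))"
        hence "enat (2^Suc U) \<le> enat U" using upper U by blast
        hence "2^Suc U \<le> U" by simp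
        moreover have "U < 2^Suc U" using less_exp[of "Suc U"] by simp
        ultimately show False by simp
      qed
      define j0 where "j0 = (LEAST j. pyth_prop TYPE('a) (2^j))"
      have pj0: "pyth_prop TYPE('a) (2^j0)" unfolding j0_def using ex by (rule LeastI_ex)
      have "j0 \<noteq> 0" using pj0 np1 by (metis power_0)
      then obtain j1 where j1: "j0 = Suc j1" using not0_implies_Suc by blast
      have "\<not> pyth_prop TYPE('a) (2^j1)"
        using not_less_Least[of j1 "\<lambda>j. pyth_prop TYPE('a) (2^j)"] j1 unfolding j0_def by simp
      hence ule: "enat (2^j0) \<le> u" using upper j1 by simp
      have ple: "p \<le> enat (2^j0)" by (rule p_le[OF pj0])
      have "finite S"
      proof (rule ccontr)
        assume inf: "\<not> finite S"
        hence "S \<noteq> {}" by auto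
        hence "Sup S = \<infinity>" using inf by (simp add: Sup_enat_def)
        thus False using uS u_def U by simp
      qed
      moreover have "S \<noteq> {}" using empty_form by (auto simp: S_def)
      ultimately have "Sup S \<in> S" by (simp add: Sup_enat_def)
      then obtain a :: "'a list" where a: "enat U = enat (length a)" "is_form a" "torsion_form a"
        using uS u_def U by (auto simp: S_def)
      have "even (length a)" by (rule torsion_even[OF P a(2) a(3)])
      hence ev: "U = 2 * (U div 2)" using a(1) by simp
      have "2^j0 \<le> U" using ule U by simp
      hence "u = enat (2 * (U div 2)) \<and> 2 * (U div 2) \<ge> 2^j0 \<and> enat (2^j0) \<ge> p \<and> p \<ge> 2"
        using ev U ple p2 by simp
      thus ?thesis unfolding admissible_pairs_def by blast
    qed
  qed
  have part2: "p \<le> enat (2 ^ (k - 1))" if k: "k \<ge> 1" "Ikt_zero TYPE('a) k" for k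
  proof (rule ccontr)
    assume "\<not> p \<le> enat (2 ^ (k - 1))"
    hence np: "\<not> pyth_prop TYPE('a) (2^(k-1))" using p_le by blast
    obtain s :: 'a where s: "\<exists>n. sum_of_squares n s" "\<not> sum_of_squares (2^(k-1)) s"
      using nonpyth_witness[OF np] by auto
    have s0: "s \<noteq> 0" using s(2) sos_zero by metis
    obtain n0 where n0: "sum_of_squares n0 s" using s(1) by blast
    define a where "a = psi (2^(k-1)) s"
    have fa: "is_form a" unfolding a_def by (rule psi_form[OF s0])
    have an: "anisotropic a" unfolding a_def by (rule psi_aniso[OF P s(2)])
    have ta: "torsion_form a" unfolding a_def by (rule psi_torsion[OF P s0 n0])
    have "in_Ik (Suc (k - 1)) a" unfolding a_def by (rule psi_in_Ik[OF s0 two])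
    hence ia: "in_Ik k a" using k(1) by simp
    have "hyperbolic a" using k(2) fa ia ta unfolding Ikt_zero_def by blast
    moreover have "a \<noteq> []" by (simp add: a_def psi_def)
    ultimately have "isotropic a" by (rule hyp_isotropic)
    thus False using an by (simp add: anisotropic_def)
  qed
  show ?thesis using part1 part2 unfolding p_def u_def by blast
qed


end
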